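(* Let $(X,d)$ be a complete metric space and let $\{T_i\}_{i\in\mathbb{N}}$ be a sequence of continuous maps $T_i:X\to X$, where each $T_i$ is a $\phi$-contraction with comparison function $\phi_i$ satisfying $\phi_i(t)<t$ for all $t>0$. Suppose there is $x_0\in X$ with $\sup_{i\in\mathbb{N}} d(T_i(x_0),x_0)<\infty$, and that $$\sum_{k=1}^{\infty}\phi_1\circ\phi_2\circ\cdots\circ\phi_k(t)<\infty\quad\text{for every } t>0.$$ Then there is a point $\bar x\in X$ such that for every initial point $x\in X$ the backward trajectory $\Psi_k(x)=T_1\circ T_2\circ\cdots\circ T_k(x)$ converges to $\bar x$ as $k\to\infty$.
   Context: A comparison function is a non-decreasing map $\phi:[0,\infty)\to[0,\infty)$ such that $\phi^p(t)\to 0$ as $p\to\infty$ for every $t\ge 0$, where $\phi^p$ denotes the $p$-fold composition of $\phi$. A map $T:X\to X$ is a $\phi$-contraction with comparison function $\phi$ if $d(T(x),T(y))\le\phi(d(x,y))$ for all $x,y\in X$. *)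

theory Defs
  imports "HOL-Analysis.Analysis"
begin

definition comparison_function :: "(real \<Rightarrow> real) \<Rightarrow> bool" where
  "comparison_function \<phi> \<longleftrightarrow>
     (\<forall>t\<ge>0. \<phi> t \<ge> 0) \<and>
     mono_on {0..} \<phi> \<and>
     (\<forall>t\<ge>0. (\<lambda>p. (\<phi> ^^ p) t) \<longlonglongrightarrow> 0)"

definition phi_contraction :: "('a::metric_space \<Rightarrow> 'a) \<Rightarrow> (real \<Rightarrow> real) \<Rightarrow> bool" where
  "phi_contraction T \<phi> \<longleftrightarrow> comparison_function \<phi> \<and> (\<forall>x y. dist (T x) (T y) \<le> \<phi> (dist x y))"

text \<open>Forward composition of a 1-indexed family: comp_upto f k = f 1 \<circ> f 2 \<circ> ... \<circ> f k
  (identity for k = 0).\<close>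
definition comp_upto :: "(nat \<Rightarrow> 'b \<Rightarrow> 'b) \<Rightarrow> nat \<Rightarrow> 'b \<Rightarrow> 'b" where
  "comp_upto f k = foldr (\<circ>) (map f [1..<k+1]) id"

end

theory Submission
  imports Defs
begin

lemma foldr_comp_snoc: "foldr (\<circ>) (xs @ [g]) id = foldr (\<circ>) xs id \<circ> g"
  by (induction xs) auto

lemma comp_upto_Suc: "comp_upto f (Suc k) = comp_upto f k \<circ> f (Suc k)"
proof -
  have "[1..<Suc k + 1] = [1..<k+1] @ [Suc k]" by simp
  then show ?thesis unfolding comp_upto_def by (simp only: map_append foldr_comp_snoc list.map)
qed

lemma comp_upto_0: "comp_upto f 0 = id"
  unfolding comp_upto_def by simp

lemma Phi_props:
  assumes "\<And>i. i \<ge> 1 \<Longrightarrow> comparison_function (\<phi> i)"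
  shows "(\<forall>t\<ge>0. comp_upto \<phi> k t \<ge> 0) \<and> mono_on {0..} (comp_upto \<phi> k)"
proof (induction k)
  case 0
  then show ?case by (simp add: comp_upto_0 mono_onI)
next
  case (Suc k)
  have c: "comparison_function (\<phi> (Suc k))" using assms by simp
  hence n: "\<And>t. t \<ge> 0 \<Longrightarrow> \<phi> (Suc k) t \<ge> 0" and m: "mono_on {0..} (\<phi> (Suc k))"
    unfolding comparison_function_def by auto
  show ?case
  proof
    show "\<forall>t\<ge>0. 0 \<le> comp_upto \<phi> (Suc k) t" using Suc n by (simp add: comp_upto_Suc)
    show "mono_on {0..} (comp_upto \<phi> (Suc k))"
    proof (rule mono_onI)
      fix r s :: real assume "r \<in> {0..}" "s \<in> {0..}" "r \<le> s"
      then have "\<phi> (Suc k) r \<le> \<phi> (Suc k) s" using m by (simp add: mono_on_def)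
      moreover have "\<phi> (Suc k) r \<ge> 0" "\<phi> (Suc k) s \<ge> 0" using n \<open>r \<in> {0..}\<close> \<open>s \<in> {0..}\<close> by auto
      ultimately show "comp_upto \<phi> (Suc k) r \<le> comp_upto \<phi> (Suc k) s"
        using Suc.IH by (simp add: comp_upto_Suc mono_on_def)
    qed
  qed
qed

lemma Psi_contr:
  assumes contr: "\<And>i. i \<ge> 1 \<Longrightarrow> phi_contraction (T i) (\<phi> i)"
  shows "dist (comp_upto T k x) (comp_upto T k y) \<le> comp_upto \<phi> k (dist x y)"
proof (induction k arbitrary: x y)
  case 0
  then show ?case by (simp add: comp_upto_0)
next
  case (Suc k)
  have cf: "\<And>i. i \<ge> 1 \<Longrightarrow> comparison_function (\<phi> i)" using contr phi_contraction_def by blast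
  have P: "mono_on {0..} (comp_upto \<phi> k)" using Phi_props[of \<phi>, OF cf] by blast
  have d: "dist (T (Suc k) x) (T (Suc k) y) \<le> \<phi> (Suc k) (dist x y)"
    using contr[of "Suc k"] unfolding phi_contraction_def by auto
  have nn: "\<phi> (Suc k) (dist x y) \<ge> 0" using cf[of "Suc k"] unfolding comparison_function_def by simp
  have "dist (comp_upto T (Suc k) x) (comp_upto T (Suc k) y)
      \<le> comp_upto \<phi> k (dist (T (Suc k) x) (T (Suc k) y))"
    using Suc.IH by (simp add: comp_upto_Suc)
  also have "\<dots> \<le> comp_upto \<phi> k (\<phi> (Suc k) (dist x y))"
    using P d nn by (simp add: mono_on_def)
  finally show ?case by (simp add: comp_upto_Suc)
qed

lemma dist_sum_bound:
  fixes s :: "nat \<Rightarrow> 'a::metric_space"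
  shows "m \<le> n \<Longrightarrow> dist (s m) (s n) \<le> (\<Sum>k\<in>{m..<n}. dist (s (Suc k)) (s k))"
proof (induction n)
  case 0
  then show ?case by simp
next
  case (Suc n)
  show ?case
  proof (cases "m = Suc n")
    case True then show ?thesis by simp
  next
    case False
    then have "m \<le> n" using Suc.prems by simp
    have "dist (s m) (s (Suc n)) \<le> dist (s m) (s n) + dist (s (Suc n)) (s n)"
      by (metis dist_commute dist_triangle)
    also have "\<dots> \<le> (\<Sum>k\<in>{m..<n}. dist (s (Suc k)) (s k)) + dist (s (Suc n)) (s n)"
      using Suc.IH \<open>m \<le> n\<close> by simp
    finally show ?thesis using \<open>m \<le> n\<close> by simp
  qed
qed

lemma summable_dist_Cauchy:
  fixes s :: "nat \<Rightarrow> 'a::metric_space"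
  assumes "summable (\<lambda>k. dist (s (Suc k)) (s k))"
  shows "Cauchy s"
proof (rule metric_CauchyI)
  fix e :: real assume "e > 0"
  then obtain N where N: "\<forall>m\<ge>N. \<forall>n. norm (\<Sum>k\<in>{m..<n}. dist (s (Suc k)) (s k)) < e"
    using assms unfolding summable_Cauchy by blast
  have "dist (s m) (s n) < e" if "m \<ge> N" "n \<ge> N" for m n
  proof (cases "m \<le> n")
    case True
    have "dist (s m) (s n) \<le> (\<Sum>k\<in>{m..<n}. dist (s (Suc k)) (s k))" using dist_sum_bound True by blast
    also have "\<dots> < e" using N that by (simp add: sum_nonneg)
    finally show ?thesis .
  next
    case False
    have "dist (s n) (s m) \<le> (\<Sum>k\<in>{n..<m}. dist (s (Suc k)) (s k))" using dist_sum_bound[of n m s] False by simp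
    also have "\<dots> < e" using N that by (simp add: sum_nonneg)
    finally show ?thesis by (simp add: dist_commute)
  qed
  then show "\<exists>M. \<forall>m\<ge>M. \<forall>n\<ge>M. dist (s m) (s n) < e" by blast
qed

theorem proposition3p11:
  fixes T :: "nat \<Rightarrow> 'a::complete_space \<Rightarrow> 'a"
    and \<phi> :: "nat \<Rightarrow> real \<Rightarrow> real"
    and x0 :: 'a
  assumes cont: "\<And>i. i \<ge> 1 \<Longrightarrow> continuous_on UNIV (T i)"
    and contr: "\<And>i. i \<ge> 1 \<Longrightarrow> phi_contraction (T i) (\<phi> i)"
    and less: "\<And>i t. i \<ge> 1 \<Longrightarrow> t > 0 \<Longrightarrow> \<phi> i t < t"
    and bdd: "bdd_above {dist (T i x0) x0 | i. i \<ge> 1}"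
    and summ: "\<And>t. t > 0 \<Longrightarrow> summable (\<lambda>k. comp_upto \<phi> (Suc k) t)"
  shows "\<exists>xbar. \<forall>x. (\<lambda>k. comp_upto T k x) \<longlonglongrightarrow> xbar"
proof -
  have cf: "\<And>i. i \<ge> 1 \<Longrightarrow> comparison_function (\<phi> i)" using contr phi_contraction_def by blast
  note P = Phi_props[of \<phi>, OF cf]
  obtain B where B: "\<And>i. i \<ge> 1 \<Longrightarrow> dist (T i x0) x0 \<le> B"
    using bdd unfolding bdd_above_def by blast
  define M where "M = max B 1"
  have Mpos: "M > 0" unfolding M_def by simp
  have MB: "\<And>i. i \<ge> 1 \<Longrightarrow> dist (T i x0) x0 \<le> M" using B unfolding M_def by force
  define s where "s k = comp_upto T k x0" for k
  have step: "dist (s (Suc (Suc k))) (s (Suc k)) \<le> comp_upto \<phi> (Suc k) M" for k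
  proof -
    have "dist (s (Suc (Suc k))) (s (Suc k)) \<le> comp_upto \<phi> (Suc k) (dist (T (Suc (Suc k)) x0) x0)"
      unfolding s_def using Psi_contr[OF contr, where k="Suc k" and x="T (Suc (Suc k)) x0" and y=x0]
      by (simp add: comp_upto_Suc[of T "Suc k"])
    also have "\<dots> \<le> comp_upto \<phi> (Suc k) M"
      using P[of "Suc k"] MB[of "Suc (Suc k)"] Mpos by (simp add: mono_on_def)
    finally show ?thesis .
  qed
  have "summable (\<lambda>k. dist (s (Suc (Suc k))) (s (Suc k)))"
    by (rule summable_comparison_test[OF _ summ[OF Mpos]]) (use step in auto)
  then have "summable (\<lambda>k. dist (s (Suc k)) (s k))"
    using summable_Suc_iff[where f="\<lambda>k. dist (s (Suc k)) (s k)"] by simp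
  then have "Cauchy s" by (rule summable_dist_Cauchy)
  then obtain xbar where xb: "s \<longlonglongrightarrow> xbar" using Cauchy_convergent_iff convergent_def by blast
  have "(\<lambda>k. comp_upto T k x) \<longlonglongrightarrow> xbar" for x
  proof (cases "x = x0")
    case True then show ?thesis using xb unfolding s_def[abs_def] by simp
  next
    case False
    then have dpos: "dist x x0 > 0" by simp
    have "(\<lambda>k. comp_upto \<phi> (Suc k) (dist x x0)) \<longlonglongrightarrow> 0"
      using summ[OF dpos] summable_LIMSEQ_zero by blast
    then have z: "(\<lambda>k. comp_upto \<phi> k (dist x x0)) \<longlonglongrightarrow> 0"
      using filterlim_sequentially_Suc by blast
    have "(\<lambda>k. dist (comp_upto T k x) (s k)) \<longlonglongrightarrow> 0"
      by (rule tendsto_sandwich[OF _ _ tendsto_const z])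
         (auto simp: s_def intro!: always_eventually Psi_contr[OF contr])
    then have a: "(\<lambda>k. dist (comp_upto T k x) (s k)) \<longlonglongrightarrow> 0" .
    have b: "(\<lambda>k. dist (s k) xbar) \<longlonglongrightarrow> 0" using xb tendsto_dist_iff by blast
    have "(\<lambda>k. dist (comp_upto T k x) xbar) \<longlonglongrightarrow> 0"
      by (rule tendsto_sandwich[OF _ _ tendsto_const tendsto_add_zero[OF a b]])
         (auto intro!: always_eventually dist_triangle)
    then show ?thesis using tendsto_dist_iff by blast
  qed
  then show ?thesis by blast
qed

end
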